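(* Let $G$ be a finite simple graph with no isolated edges and maximum degree $\Delta$. Let $G'$ be the multigraph obtained from $G$ by contracting every edge $uv$ of $G$ such that $\deg(u)<\Delta/3$, $\deg(v)<\Delta/3$, and neither $u$ nor $v$ has any neighbor other than each other of degree less than $\Delta/3$ (contracting means deleting $uv$ and identifying $u$ and $v$ into one vertex). Then $G'$ is a loopless multigraph with edge multiplicity at most $2$, $\Delta(G')=\Delta$, and the subgraph $H$ of $G'$ induced by the vertices of degree less than $\Delta/3$ in $G'$ has no isolated edges. Moreover, for every positive integer $p$, if $G'$ has an avd-coloring using at most $p$ colors, then so does $G$.
   Context: For a (partial) edge coloring $c$ and a vertex $v$, $S_c(v)$ denotes the set of colors on the colored edges incident to $v$. An avd-coloring of a (multi)graph is a proper edge coloring $c$ (edges sharing an endpoint, including parallel edges, get distinct colors) such that $S_c(u)\neq S_c(v)$ for all adjacent vertices $u,v$. *)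

theory Defs
  imports Main Complex_Main
begin

text \<open>A (multi)graph is given by a vertex set VV, an edge set EE of edge identifiers,
  and an endpoint map ends (ends e is the set of endpoints of e; a loop has one endpoint).
  A simple graph (V, E) is the multigraph (V, E, id) with every edge a 2-subset of V.\<close>

definition simple_graph :: "'a set \<Rightarrow> 'a set set \<Rightarrow> bool" where
  "simple_graph V E \<longleftrightarrow> finite V \<and>
     (\<forall>e\<in>E. \<exists>u v. u \<noteq> v \<and> e = {u, v} \<and> u \<in> V \<and> v \<in> V)"

text \<open>Degree in a multigraph; a loop contributes 2.\<close>
definition mdeg :: "'e set \<Rightarrow> ('e \<Rightarrow> 'v set) \<Rightarrow> 'v \<Rightarrow> nat" where
  "mdeg EE ends v = card {e\<in>EE. v \<in> ends e} + card {e\<in>EE. ends e = {v}}"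

definition maxdeg :: "'v set \<Rightarrow> 'e set \<Rightarrow> ('e \<Rightarrow> 'v set) \<Rightarrow> nat" where
  "maxdeg VV EE ends = (if VV = {} then 0 else Max (mdeg EE ends ` VV))"

definition madj :: "'e set \<Rightarrow> ('e \<Rightarrow> 'v set) \<Rightarrow> 'v \<Rightarrow> 'v \<Rightarrow> bool" where
  "madj EE ends u v \<longleftrightarrow> u \<noteq> v \<and> (\<exists>e\<in>EE. ends e = {u, v})"

definition no_isolated_edges :: "'e set \<Rightarrow> ('e \<Rightarrow> 'v set) \<Rightarrow> bool" where
  "no_isolated_edges EE ends \<longleftrightarrow>
     \<not> (\<exists>e\<in>EE. \<exists>u v. u \<noteq> v \<and> ends e = {u, v} \<and> mdeg EE ends u = 1 \<and> mdeg EE ends v = 1)"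

definition loopless :: "'e set \<Rightarrow> ('e \<Rightarrow> 'v set) \<Rightarrow> bool" where
  "loopless EE ends \<longleftrightarrow> (\<forall>e\<in>EE. card (ends e) = 2)"

definition multiplicity :: "'e set \<Rightarrow> ('e \<Rightarrow> 'v set) \<Rightarrow> 'v \<Rightarrow> 'v \<Rightarrow> nat" where
  "multiplicity EE ends u v = card {e\<in>EE. ends e = {u, v}}"

definition Sc :: "'e set \<Rightarrow> ('e \<Rightarrow> 'v set) \<Rightarrow> ('e \<Rightarrow> 'c) \<Rightarrow> 'v \<Rightarrow> 'c set" where
  "Sc EE ends c v = c ` {e\<in>EE. v \<in> ends e}"

definition avd_coloring :: "'e set \<Rightarrow> ('e \<Rightarrow> 'v set) \<Rightarrow> ('e \<Rightarrow> 'c) \<Rightarrow> bool" where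
  "avd_coloring EE ends c \<longleftrightarrow>
     (\<forall>e\<in>EE. \<forall>f\<in>EE. e \<noteq> f \<and> ends e \<inter> ends f \<noteq> {} \<longrightarrow> c e \<noteq> c f) \<and>
     (\<forall>u v. madj EE ends u v \<longrightarrow> Sc EE ends c u \<noteq> Sc EE ends c v)"

definition low :: "'a set \<Rightarrow> 'a set set \<Rightarrow> 'a \<Rightarrow> bool" where
  "low V E v \<longleftrightarrow> real (mdeg E id v) < real (maxdeg V E id) / 3"

definition contract_edges :: "'a set \<Rightarrow> 'a set set \<Rightarrow> 'a set set" where
  "contract_edges V E = {e\<in>E. \<exists>u v. u \<noteq> v \<and> e = {u, v} \<and> low V E u \<and> low V E v \<and>
      (\<forall>w. {u, w} \<in> E \<and> w \<noteq> v \<longrightarrow> \<not> low V E w) \<and>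
      (\<forall>w. {v, w} \<in> E \<and> w \<noteq> u \<longrightarrow> \<not> low V E w)}"

text \<open>Vertex of G' containing v: the class of v under identification along contracted edges.\<close>
definition cls :: "'a set \<Rightarrow> 'a set set \<Rightarrow> 'a \<Rightarrow> 'a set" where
  "cls V E v = {w. (v, w) \<in> {(x, y). {x, y} \<in> contract_edges V E}\<^sup>*}"

definition contr_V :: "'a set \<Rightarrow> 'a set set \<Rightarrow> 'a set set" where
  "contr_V V E = cls V E ` V"

definition contr_E :: "'a set \<Rightarrow> 'a set set \<Rightarrow> 'a set set" where
  "contr_E V E = E - contract_edges V E"

definition contr_ends :: "'a set \<Rightarrow> 'a set set \<Rightarrow> 'a set \<Rightarrow> 'a set set" where
  "contr_ends V E e = cls V E ` e"

end

theory Submission imports Defs begin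

locale GG =
  fixes V :: "'a set" and E :: "'a set set"
  assumes sg: "simple_graph V E" and nie: "no_isolated_edges E id"
begin

abbreviation "CE \<equiv> contract_edges V E"
abbreviation "E' \<equiv> contr_E V E"
abbreviation "Dl \<equiv> maxdeg V E id"
definition deg where "deg x = card {e\<in>E. x \<in> e}"
definition single where "single x \<longleftrightarrow> (\<forall>y. {x,y} \<notin> CE)"

lemma finV: "finite V" using sg by (simp add: simple_graph_def)

lemma E_form: "e \<in> E \<Longrightarrow> \<exists>u v. u \<noteq> v \<and> e = {u, v} \<and> u \<in> V \<and> v \<in> V"
  using sg by (simp add: simple_graph_def)

lemma E_sub: "E \<subseteq> Pow V" using E_form by blast

lemma finE: "finite E" using E_sub finV by (meson finite_Pow_iff finite_subset)

lemma no_loop: "{x} \<notin> E"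
proof
  assume "{x} \<in> E"
  then obtain u v where "u \<noteq> v" "{x} = {u,v}" using E_form by blast
  then show False by (metis insertI1 insert_commute singletonD)
qed

lemma mdeg_E: "mdeg E id x = deg x"
proof -
  have "{e\<in>E. id e = {x}} = {}" using no_loop by auto
  then show ?thesis by (simp add: mdeg_def deg_def)
qed

lemma deg_le: "x \<in> V \<Longrightarrow> deg x \<le> Dl"
  using finV by (auto simp: maxdeg_def mdeg_E[symmetric])

lemma deg_max: "V \<noteq> {} \<Longrightarrow> \<exists>x\<in>V. deg x = Dl"
proof -
  assume "V \<noteq> {}"
  then have "Max (mdeg E id ` V) \<in> mdeg E id ` V" using finV by auto
  then show ?thesis using \<open>V \<noteq> {}\<close> by (auto simp: maxdeg_def mdeg_E)
qed

lemma low_iff: "low V E x \<longleftrightarrow> real (deg x) < real Dl / 3"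
  by (simp add: low_def mdeg_E)

lemma CE_sub: "CE \<subseteq> E" by (auto simp: contract_edges_def)

lemma key: assumes "{a,b} \<in> CE"
  shows "a \<noteq> b \<and> {a,b} \<in> E \<and> low V E a \<and> low V E b \<and> (\<forall>w. {a,w} \<in> E \<and> w \<noteq> b \<longrightarrow> \<not> low V E w)"
proof -
  from assms obtain u v where uv: "u \<noteq> v" "{a,b} = {u,v}" "low V E u" "low V E v"
     "\<forall>w. {u, w} \<in> E \<and> w \<noteq> v \<longrightarrow> \<not> low V E w"
     "\<forall>w. {v, w} \<in> E \<and> w \<noteq> u \<longrightarrow> \<not> low V E w" "{a,b} \<in> E"
    unfolding contract_edges_def by blast
  from uv(2) have "(a = u \<and> b = v) \<or> (a = v \<and> b = u)" by (metis doubleton_eq_iff)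
  then show ?thesis using uv by auto
qed

lemma key': "{a,b} \<in> CE \<Longrightarrow> {b,a} \<in> CE" by (simp add: insert_commute)

lemma matching: "{a,b} \<in> CE \<Longrightarrow> {a,c} \<in> CE \<Longrightarrow> b = c"
proof -
  assume h: "{a,b} \<in> CE" "{a,c} \<in> CE"
  show "b = c"
  proof (rule ccontr)
    assume "b \<noteq> c"
    have "{a,c} \<in> E" "low V E c" using key[OF h(2)] by auto
    then show False using key[OF h(1)] \<open>b \<noteq> c\<close> by auto
  qed
qed

lemma CE_elem: "e \<in> CE \<Longrightarrow> x \<in> e \<Longrightarrow> \<exists>y. e = {x,y} \<and> {x,y} \<in> CE"
proof -
  assume "e \<in> CE" "x \<in> e"
  then obtain u v where "e = {u,v}" using CE_sub E_form by blast
  then show ?thesis using \<open>e \<in> CE\<close> \<open>x \<in> e\<close> by (auto simp: insert_commute)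
qed

lemma CE_share: "e \<in> CE \<Longrightarrow> f \<in> CE \<Longrightarrow> x \<in> e \<Longrightarrow> x \<in> f \<Longrightarrow> e = f"
  using CE_elem matching by metis

lemma rt: "(a, z) \<in> {(x, y). {x, y} \<in> CE}\<^sup>* \<Longrightarrow> z = a \<or> {a,z} \<in> CE"
proof (induction rule: rtrancl_induct)
  case base then show ?case by simp
next
  case (step y z)
  then show ?case using matching key'
  proof -
    have yz: "{y,z} \<in> CE" using step(2) by simp
    show ?case using step(3)
    proof
      assume "y = a" then show ?case using yz by simp
    next
      assume "{a,y} \<in> CE"
      then have "{y,a} \<in> CE" by (simp add: insert_commute)
      then have "z = a" using matching yz by blast
      then show ?case by simp
    qed
  qed
qed

lemma cls_self: "a \<in> cls V E a" by (simp add: cls_def)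

lemma cls_pair: "{a,b} \<in> CE \<Longrightarrow> cls V E a = {a,b}"
proof
  assume h: "{a,b} \<in> CE"
  show "cls V E a \<subseteq> {a,b}"
  proof
    fix z assume "z \<in> cls V E a"
    then have "z = a \<or> {a,z} \<in> CE" using rt unfolding cls_def by blast
    then show "z \<in> {a,b}" using matching[OF h] by auto
  qed
  show "{a,b} \<subseteq> cls V E a" using h unfolding cls_def by auto
qed

lemma cls_single: "single a \<Longrightarrow> cls V E a = {a}"
  using rt unfolding cls_def single_def by auto

lemma cls_eq: "cls V E a = cls V E b \<Longrightarrow> a = b \<or> {a,b} \<in> CE"
proof -
  assume h: "cls V E a = cls V E b"
  have "b \<in> cls V E a" using h cls_self by metis
  then have "b = a \<or> {a,b} \<in> CE" using rt unfolding cls_def by blast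
  then show ?thesis by auto
qed

lemma cls_card: "finite (cls V E a) \<and> card (cls V E a) \<le> 2"
  by (cases "single a") (auto simp: cls_single single_def card_insert_if dest!: cls_pair)


abbreviation "ends' \<equiv> contr_ends V E"
abbreviation "C \<equiv> cls V E"

lemma E'_def2: "E' = E - CE" by (simp add: contr_E_def)

lemma E'_form: "e \<in> E' \<Longrightarrow> \<exists>a b. a \<noteq> b \<and> e = {a,b} \<and> {a,b} \<in> E \<and> {a,b} \<notin> CE \<and> C a \<noteq> C b"
proof -
  assume h: "e \<in> E'"
  then obtain a b where ab: "a \<noteq> b" "e = {a,b}" using E_form E'_def2 by blast
  then have "{a,b} \<notin> CE" "{a,b} \<in> E" using h E'_def2 by auto
  then have "C a \<noteq> C b" using cls_eq ab(1) by blast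
  then show ?thesis using ab \<open>{a,b} \<notin> CE\<close> \<open>{a,b} \<in> E\<close> by blast
qed

lemma ends'_eq: "ends' e = C ` e" by (simp add: contr_ends_def)

lemma loopless': "loopless E' ends'"
  unfolding loopless_def
proof
  fix e assume "e \<in> E'"
  then obtain a b where "a \<noteq> b" "e = {a,b}" "C a \<noteq> C b" using E'_form by blast
  then show "card (ends' e) = 2" by (simp add: ends'_eq)
qed

lemma merged_low: "\<not> single a \<Longrightarrow> low V E a"
  using key unfolding single_def by blast

lemma merged_nb: "{a,b} \<in> E \<Longrightarrow> {a,b} \<notin> CE \<Longrightarrow> \<not> single a \<Longrightarrow> \<not> low V E b"
proof -
  assume h: "{a,b} \<in> E" "{a,b} \<notin> CE" "\<not> single a"
  then obtain a' where a': "{a,a'} \<in> CE" unfolding single_def by blast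
  then have "b \<noteq> a'" using h by auto
  then show ?thesis using key[OF a'] h by auto
qed

lemma single_edges: "single x \<Longrightarrow> {e\<in>E'. C x \<in> C ` e} = {e\<in>E. x \<in> e}"
proof (intro equalityI subsetI)
  fix e assume s: "single x" and e: "e \<in> {e\<in>E'. C x \<in> C ` e}"
  then obtain w where w: "w \<in> e" "C x = C w" by auto
  then have "x = w" using cls_eq s unfolding single_def by blast
  then show "e \<in> {e\<in>E. x \<in> e}" using e w E'_def2 by auto
next
  fix e assume s: "single x" and e: "e \<in> {e\<in>E. x \<in> e}"
  then obtain u v where uv: "e = {u,v}" using E_form by blast
  then have "e = {x,u} \<or> e = {x,v}" using e by (auto simp: insert_commute)
  then have "e \<notin> CE" using s unfolding single_def by blast
  then show "e \<in> {e\<in>E'. C x \<in> C ` e}" using e E'_def2 by auto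
qed

lemma merged_edges: "{x,y} \<in> CE \<Longrightarrow> {e\<in>E'. C x \<in> C ` e} \<subseteq> {e\<in>E. x \<in> e} \<union> {e\<in>E. y \<in> e}"
proof
  fix e assume h: "{x,y} \<in> CE" and e: "e \<in> {e\<in>E'. C x \<in> C ` e}"
  then obtain w where w: "w \<in> e" "C x = C w" by auto
  then have "w = x \<or> w = y" using cls_pair[OF h] cls_self by blast
  then show "e \<in> {e\<in>E. x \<in> e} \<union> {e\<in>E. y \<in> e}" using e w E'_def2 by auto
qed

lemma mdeg': "mdeg E' ends' X = card {e\<in>E'. X \<in> C ` e}"
proof -
  have "{e\<in>E'. C ` e = {X}} = {}" using loopless' unfolding loopless_def ends'_eq by fastforce
  then show ?thesis unfolding mdeg_def ends'_eq by (simp only: card.empty add_0_right)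
qed

lemma deg'_single: "single x \<Longrightarrow> mdeg E' ends' (C x) = deg x"
  using single_edges mdeg' deg_def by simp

lemma finE': "finite E'" using finE E'_def2 by simp

lemma deg'_merged: "{x,y} \<in> CE \<Longrightarrow> mdeg E' ends' (C x) \<le> deg x + deg y"
proof -
  assume h: "{x,y} \<in> CE"
  have "mdeg E' ends' (C x) \<le> card ({e\<in>E. x \<in> e} \<union> {e\<in>E. y \<in> e})"
    unfolding mdeg' by (rule card_mono) (use finE merged_edges[OF h] in auto)
  also have "\<dots> \<le> deg x + deg y" unfolding deg_def by (rule card_Un_le)
  finally show ?thesis .
qed

lemma deg'_le: "x \<in> V \<Longrightarrow> mdeg E' ends' (C x) \<le> Dl"
proof (cases "single x")
  case True
  assume "x \<in> V"
  then show ?thesis using deg'_single[OF True] deg_le by simp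
next
  case False
  then obtain y where y: "{x,y} \<in> CE" unfolding single_def by blast
  have "real (deg x) < real Dl / 3" "real (deg y) < real Dl / 3" using key[OF y] low_iff by auto
  then have "deg x + deg y \<le> Dl" by linarith
  then show ?thesis using deg'_merged[OF y] by simp
qed


lemma mult_single: assumes "single b"
  shows "card {e\<in>E'. C ` e = {C a, C b}} \<le> 2"
proof -
  have sub: "{e\<in>E'. C ` e = {C a, C b}} \<subseteq> (\<lambda>c. {c,b}) ` C a"
  proof
    fix e assume e: "e \<in> {e\<in>E'. C ` e = {C a, C b}}"
    then have eE: "e \<in> E'" "C ` e = {C a, C b}" by simp_all
    obtain c d where cd: "c \<noteq> d" "e = {c,d}" "C c \<noteq> C d" using E'_form[OF eE(1)] by blast
    have Cb: "C b = {b}" using cls_single assms by simp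
    have eq: "{C c, C d} = {C a, {b}}" using eE(2) cd(2) Cb by simp
    show "e \<in> (\<lambda>c. {c,b}) ` C a"
    proof (cases "C d = {b}")
      case True
      then have db: "d = b" using cls_self[of d] by simp
      have "C c = C a" using eq True cd(3) by (auto simp: doubleton_eq_iff)
      then have "c \<in> C a" using cls_self[of c] by simp
      then show ?thesis using cd(2) db by blast
    next
      case False
      then have "C c = {b}" "C d = C a" using eq by (auto simp: doubleton_eq_iff)
      then have "c = b" "d \<in> C a" using cls_self[of c] cls_self[of d] by simp_all
      then show ?thesis using cd(2) by (auto simp: insert_commute)
    qed
  qed
  have "card {e\<in>E'. C ` e = {C a, C b}} \<le> card ((\<lambda>c. {c,b}) ` C a)"
    by (rule card_mono[OF _ sub]) (simp add: cls_card)
  also have "\<dots> \<le> card (C a)" by (rule card_image_le) (simp add: cls_card)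
  also have "\<dots> \<le> 2" using cls_card by simp
  finally show ?thesis .
qed

lemma mult': "multiplicity E' ends' X Y \<le> 2"
proof (cases "{e\<in>E'. C ` e = {X, Y}} = {}")
  case True
  have "card {e\<in>E'. C ` e = {X, Y}} = 0" using True by (simp only: card.empty)
  then show ?thesis by (simp add: multiplicity_def ends'_eq)
next
  case False
  then obtain e0 where e0: "e0 \<in> E'" "C ` e0 = {X,Y}" by blast
  then obtain a b where ab: "a \<noteq> b" "e0 = {a,b}" "{a,b} \<in> E" "{a,b} \<notin> CE" using E'_form[OF e0(1)] by blast
  have XY: "{X,Y} = {C a, C b}" using e0(2) ab(2) by simp
  have "single a \<or> single b"
  proof (rule ccontr)
    assume "\<not> (single a \<or> single b)"
    then have "low V E b" "\<not> single a" using merged_low by auto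
    then show False using merged_nb[OF ab(3,4)] by blast
  qed
  then show ?thesis
  proof
    assume "single a"
    then have "card {e\<in>E'. C ` e = {C b, C a}} \<le> 2" by (rule mult_single)
    moreover have "{X,Y} = {C b, C a}" using XY by (simp add: insert_commute)
    ultimately show ?thesis by (simp add: multiplicity_def ends'_eq)
  next
    assume "single b"
    then have "card {e\<in>E'. C ` e = {C a, C b}} \<le> 2" by (rule mult_single)
    then show ?thesis using XY by (simp add: multiplicity_def ends'_eq)
  qed
qed

lemma maxdeg': "maxdeg (contr_V V E) E' ends' = Dl"
proof (cases "V = {}")
  case True
  then show ?thesis by (simp add: maxdeg_def contr_V_def)
next
  case False
  then obtain x where x: "x \<in> V" "deg x = Dl" using deg_max by blast
  have "single x"
  proof (rule ccontr)
    assume "\<not> single x"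
    then have "real (deg x) < real Dl / 3" using merged_low low_iff by blast
    then show False using x by simp
  qed
  then have x': "mdeg E' ends' (C x) = Dl" using deg'_single x by simp
  have "Max (mdeg E' ends' ` C ` V) = Dl"
  proof (rule Max_eqI)
    show "finite (mdeg E' ends' ` C ` V)" using finV by simp
    show "\<And>y. y \<in> mdeg E' ends' ` C ` V \<Longrightarrow> y \<le> Dl" using deg'_le by auto
    show "Dl \<in> mdeg E' ends' ` C ` V" using x x' by (metis image_eqI)
  qed
  then show ?thesis using False by (simp add: maxdeg_def contr_V_def)
qed


abbreviation "EH \<equiv> {e\<in>E'. \<forall>x\<in>ends' e. real (mdeg E' ends' x) < real Dl / 3}"

lemma H_low: assumes "e \<in> EH" "x \<in> e" shows "low V E x"
proof (cases "single x")
  case True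
  have "real (mdeg E' ends' (C x)) < real Dl / 3" using assms by (auto simp: ends'_eq)
  then show ?thesis using deg'_single[OF True] low_iff by simp
next
  case False
  then show ?thesis by (rule merged_low)
qed

lemma H_single: assumes "e \<in> EH" "e = {x,y}" shows "single x"
proof (rule ccontr)
  assume ns: "\<not> single x"
  have "e \<in> E" "e \<notin> CE" using assms(1) E'_def2 by auto
  then have "\<not> low V E y" using merged_nb[OF _ _ ns] assms(2) by blast
  moreover have "low V E y" using H_low[OF assms(1)] assms(2) by blast
  ultimately show False by blast
qed

lemma H_extra: assumes "single x" "low V E x" "{x,w} \<in> E" "low V E w"
  shows "{x,w} \<in> EH"
proof -
  have xw: "x \<noteq> w" using assms(3) no_loop by (metis insert_absorb2)
  have sw: "single w"
  proof (rule ccontr)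
    assume "\<not> single w"
    then obtain w' where w': "{w,w'} \<in> CE" unfolding single_def by blast
    have "x \<noteq> w'" using w' assms(1) unfolding single_def by (metis insert_commute)
    moreover have "{w,x} \<in> E" using assms(3) by (simp add: insert_commute)
    ultimately show False using key[OF w'] assms(2) by blast
  qed
  have "{x,w} \<notin> CE" using assms(1) unfolding single_def by blast
  then have inE': "{x,w} \<in> E'" using assms(3) E'_def2 by simp
  have "real (mdeg E' ends' (C x)) < real Dl / 3" using deg'_single[OF assms(1)] assms(2) low_iff by simp
  moreover have "real (mdeg E' ends' (C w)) < real Dl / 3" using deg'_single[OF sw] assms(4) low_iff by simp
  ultimately show ?thesis using inE' by (simp add: ends'_eq)
qed

lemma finEH: "finite EH" using finE' by simp

lemma H_deg2: assumes "{x,y} \<in> EH" "{x,w} \<in> EH" "x \<noteq> y" "w \<noteq> y"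
  shows "mdeg EH ends' (C x) \<ge> 2"
proof -
  have ne: "{x,y} \<noteq> {x,w}" using assms(3,4) by (auto simp: doubleton_eq_iff)
  have "{{x,y},{x,w}} \<subseteq> {e\<in>EH. C x \<in> ends' e}" using assms(1,2) by (auto simp: ends'_eq)
  then have "card {{x,y},{x,w}} \<le> card {e\<in>EH. C x \<in> ends' e}"
    by (rule card_mono[rotated]) (simp add: finE')
  then have "2 \<le> card {e\<in>EH. C x \<in> ends' e}" using ne by simp
  then show ?thesis unfolding mdeg_def by simp
qed

lemma H_side: assumes "{x,y} \<in> EH" "x \<noteq> y" "{x,w} \<in> E" "w \<noteq> y" "low V E w"
  shows "mdeg EH ends' (C x) \<ge> 2"
proof -
  have sx: "single x" using H_single assms(1) by blast
  have lx: "low V E x" using H_low assms(1) by blast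
  have "{x,w} \<in> EH" using H_extra[OF sx lx assms(3,5)] .
  then show ?thesis using H_deg2 assms by blast
qed

lemma H_nie: "no_isolated_edges EH ends'"
  unfolding no_isolated_edges_def
proof (rule notI, elim bexE exE conjE)
  fix e U W
  assume e: "e \<in> EH" "U \<noteq> W" "ends' e = {U,W}" "mdeg EH ends' U = 1" "mdeg EH ends' W = 1"
  have eE': "e \<in> E'" using e(1) by simp
  obtain x y where xy: "x \<noteq> y" "e = {x,y}" "{x,y} \<in> E" "{x,y} \<notin> CE" "C x \<noteq> C y"
    using E'_form[OF eE'] by blast
  have ex: "{x,y} \<in> EH" and ey: "{y,x} \<in> EH" using e(1) xy(2) by (simp_all add: insert_commute)
  have lx: "low V E x" using H_low[OF e(1)] xy(2) by simp
  have ly: "low V E y" using H_low[OF e(1)] xy(2) by simp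
  have UW: "{U,W} = {C x, C y}" using e(3) xy(2) by (simp add: ends'_eq)
  have dx: "mdeg EH ends' (C x) = 1" and dy: "mdeg EH ends' (C y) = 1"
    using UW e(4,5) by (auto simp: doubleton_eq_iff)
  have "\<not> ((\<forall>w. {x, w} \<in> E \<and> w \<noteq> y \<longrightarrow> \<not> low V E w) \<and> (\<forall>w. {y, w} \<in> E \<and> w \<noteq> x \<longrightarrow> \<not> low V E w))"
  proof
    assume "(\<forall>w. {x, w} \<in> E \<and> w \<noteq> y \<longrightarrow> \<not> low V E w) \<and> (\<forall>w. {y, w} \<in> E \<and> w \<noteq> x \<longrightarrow> \<not> low V E w)"
    then have "{x,y} \<in> CE" using xy(1,3) lx ly unfolding contract_edges_def by blast
    then show False using xy(4) by blast
  qed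
  then obtain w where "({x, w} \<in> E \<and> w \<noteq> y \<and> low V E w) \<or> ({y, w} \<in> E \<and> w \<noteq> x \<and> low V E w)"
    by blast
  then show False
  proof
    assume "{x, w} \<in> E \<and> w \<noteq> y \<and> low V E w"
    then have "mdeg EH ends' (C x) \<ge> 2" using H_side[OF ex xy(1)] by blast
    then show False using dx by simp
  next
    assume "{y, w} \<in> E \<and> w \<noteq> x \<and> low V E w"
    then have "mdeg EH ends' (C y) \<ge> 2" using H_side[OF ey] xy(1) by blast
    then show False using dy by simp
  qed
qed


lemma deg_fin: "finite {e\<in>E. x \<in> e}" using finE by simp

end

locale GC = GG +
  fixes c :: "'a set \<Rightarrow> nat"
  assumes avd: "avd_coloring E' ends' c"
begin

definition "P = c ` E'"
definition "Nb e = {f\<in>E'. f \<inter> e \<noteq> {}}"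
definition "al e = (SOME a. a \<in> P \<and> a \<notin> c ` Nb e)"
definition "c2 e = (if e \<in> CE then al e else c e)"

lemma finP: "finite P" unfolding P_def using finE' by simp

lemma L1: "e \<in> E' \<Longrightarrow> f \<in> E' \<Longrightarrow> e \<noteq> f \<Longrightarrow> X \<in> C ` e \<Longrightarrow> X \<in> C ` f \<Longrightarrow> c e \<noteq> c f"
proof -
  assume h: "e \<in> E'" "f \<in> E'" "e \<noteq> f" "X \<in> C ` e" "X \<in> C ` f"
  then have "ends' e \<inter> ends' f \<noteq> {}" by (auto simp: ends'_eq)
  then show ?thesis using avd h(1-3) unfolding avd_coloring_def by blast
qed

lemma L2: assumes "V \<noteq> {}" shows "Dl \<le> card P"
proof -
  obtain w where w: "w \<in> V" "deg w = Dl" using deg_max assms by blast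
  have sw: "single w"
  proof (rule ccontr)
    assume "\<not> single w"
    then have "real (deg w) < real Dl / 3" using merged_low low_iff by blast
    then show False using w by simp
  qed
  have sub: "{e\<in>E. w \<in> e} \<subseteq> E'" using single_edges[OF sw] by blast
  have inj: "inj_on c {e\<in>E. w \<in> e}"
  proof (rule inj_onI)
    fix e f assume "e \<in> {e\<in>E. w \<in> e}" "f \<in> {e\<in>E. w \<in> e}" "c e = c f"
    then show "e = f" using L1[of e f "C w"] sub by blast
  qed
  have "Dl = card (c ` {e\<in>E. w \<in> e})" using card_image[OF inj] w deg_def by simp
  also have "\<dots> \<le> card P" unfolding P_def by (rule card_mono) (use finE' sub in auto)
  finally show ?thesis .
qed

lemma L3: assumes "{u,v} \<in> CE" shows "\<exists>a. a \<in> P \<and> a \<notin> c ` Nb {u,v}"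
proof (rule ccontr)
  assume "\<not> (\<exists>a. a \<in> P \<and> a \<notin> c ` Nb {u,v})"
  then have PN: "P \<subseteq> c ` Nb {u,v}" by blast
  have k: "{u,v} \<in> E" "low V E u" "low V E v" using key[OF assms] by auto
  then have "u \<in> V" using E_sub by blast
  then have "V \<noteq> {}" by blast
  have NS: "Nb {u,v} \<subseteq> {e\<in>E. u \<in> e} \<union> {e\<in>E. v \<in> e}" unfolding Nb_def E'_def2 by blast
  have "card P \<le> card (c ` Nb {u,v})" by (rule card_mono[OF _ PN]) (simp add: Nb_def finE')
  also have "\<dots> \<le> card (Nb {u,v})" by (rule card_image_le) (simp add: Nb_def finE')
  also have "\<dots> \<le> card ({e\<in>E. u \<in> e} \<union> {e\<in>E. v \<in> e})" by (rule card_mono[OF _ NS]) (simp add: finE)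
  also have "\<dots> \<le> deg u + deg v" unfolding deg_def by (rule card_Un_le)
  finally have "card P \<le> deg u + deg v" .
  moreover have "Dl \<le> card P" using L2 \<open>V \<noteq> {}\<close> by blast
  moreover have "real (deg u) < real Dl / 3" "real (deg v) < real Dl / 3" using k low_iff by auto
  ultimately show False by linarith
qed

lemma L4: assumes "e \<in> CE" shows "al e \<in> P \<and> al e \<notin> c ` Nb e"
proof -
  obtain u v where "e = {u,v}" using assms CE_sub E_form by blast
  then have "\<exists>a. a \<in> P \<and> a \<notin> c ` Nb e" using L3 assms by blast
  then show ?thesis unfolding al_def by (rule someI_ex)
qed

lemma c2_proper: assumes "e \<in> E" "f \<in> E" "e \<noteq> f" "x \<in> e" "x \<in> f" shows "c2 e \<noteq> c2 f"
proof (cases "e \<in> CE")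
  case True
  show ?thesis
  proof (cases "f \<in> CE")
    case True
    then show ?thesis using CE_share \<open>e \<in> CE\<close> assms by blast
  next
    case False
    then have "f \<in> Nb e" using assms unfolding Nb_def E'_def2 by blast
    then show ?thesis using L4[OF True] False True unfolding c2_def by auto
  qed
next
  case False
  show ?thesis
  proof (cases "f \<in> CE")
    case True
    then have "e \<in> Nb f" using assms False unfolding Nb_def E'_def2 by blast
    then have "c e \<in> c ` Nb f" by (rule imageI)
    then show ?thesis using L4[OF True] False True unfolding c2_def by auto
  next
    case False2: False
    then have "e \<in> E'" "f \<in> E'" using assms False E'_def2 by auto
    then have "c e \<noteq> c f" using L1[of e f "C x"] assms by blast
    then show ?thesis using False False2 unfolding c2_def by simp
  qed
qed

lemma c2_card: "card (c2 ` {e\<in>E. x \<in> e}) = deg x"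
proof -
  have "inj_on c2 {e\<in>E. x \<in> e}"
    by (rule inj_onI) (use c2_proper in blast)
  then show ?thesis using card_image deg_def by metis
qed

lemma c2_range: "c2 ` E \<subseteq> P"
proof
  fix a assume "a \<in> c2 ` E"
  then obtain e where e: "e \<in> E" "a = c2 e" by blast
  show "a \<in> P"
  proof (cases "e \<in> CE")
    case True then show ?thesis using L4 e unfolding c2_def by simp
  next
    case False then show ?thesis using e unfolding c2_def P_def E'_def2 by simp
  qed
qed


lemma Ex_pair: assumes "{x,y} \<in> CE" shows "{e\<in>E. x \<in> e} = insert {x,y} {f\<in>E'. x \<in> f}"
proof (intro equalityI subsetI)
  fix e assume e: "e \<in> {e\<in>E. x \<in> e}"
  show "e \<in> insert {x,y} {f\<in>E'. x \<in> f}"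
  proof (cases "e \<in> CE")
    case True
    then have "e = {x,y}" using CE_share[OF True assms] e by blast
    then show ?thesis by simp
  next
    case False then show ?thesis using e E'_def2 by simp
  qed
next
  fix e assume "e \<in> insert {x,y} {f\<in>E'. x \<in> f}"
  then show "e \<in> {e\<in>E. x \<in> e}" using assms CE_sub E'_def2 by auto
qed

lemma c2_on_E': "f \<in> E' \<Longrightarrow> c2 f = c f" unfolding c2_def E'_def2 by simp

lemma Sc_pair: assumes "{x,y} \<in> CE"
  shows "Sc E id c2 x = insert (al {x,y}) (c ` {f\<in>E'. x \<in> f})"
proof -
  have "Sc E id c2 x = c2 ` insert {x,y} {f\<in>E'. x \<in> f}" unfolding Sc_def using Ex_pair[OF assms] by simp
  also have "\<dots> = insert (c2 {x,y}) (c2 ` {f\<in>E'. x \<in> f})" by simp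
  also have "c2 ` {f\<in>E'. x \<in> f} = c ` {f\<in>E'. x \<in> f}" using c2_on_E' by (intro image_cong) auto
  also have "c2 {x,y} = al {x,y}" using assms unfolding c2_def by simp
  finally show ?thesis .
qed

lemma avd_pair: assumes "{x,y} \<in> CE" shows "Sc E id c2 x \<noteq> Sc E id c2 y"
proof
  assume eq: "Sc E id c2 x = Sc E id c2 y"
  have yx: "{y,x} \<in> CE" using assms by (simp add: insert_commute)
  define A where "A = c ` {f\<in>E'. x \<in> f}"
  define B where "B = c ` {f\<in>E'. y \<in> f}"
  have a: "al {x,y} \<notin> c ` Nb {x,y}" using L4[OF assms] by blast
  have "{f\<in>E'. x \<in> f} \<subseteq> Nb {x,y}" "{f\<in>E'. y \<in> f} \<subseteq> Nb {x,y}" unfolding Nb_def by auto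
  then have aA: "al {x,y} \<notin> A" and aB: "al {x,y} \<notin> B" using a unfolding A_def B_def by blast+
  have "insert (al {x,y}) A = insert (al {x,y}) B"
    using eq Sc_pair[OF assms] Sc_pair[OF yx] unfolding A_def B_def by (simp add: insert_commute)
  then have AB: "A = B" using aA aB by (metis insert_ident)
  have xy: "x \<noteq> y" using key[OF assms] by simp
  have Cxy: "C x = C y" using cls_pair[OF assms] cls_pair[OF yx] by (simp add: insert_commute)
  have "A \<inter> B = {}"
  proof (rule ccontr)
    assume "A \<inter> B \<noteq> {}"
    then obtain f g where fg: "f \<in> E'" "x \<in> f" "g \<in> E'" "y \<in> g" "c f = c g" unfolding A_def B_def by blast
    show False
    proof (cases "f = g")
      case True
      obtain u v where uv: "f = {u,v}" using E'_form[OF fg(1)] by blast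
      then have "f = {x,y}" using fg True xy by auto
      then show False using fg(1) assms E'_def2 by simp
    next
      case False
      have "C x \<in> C ` f" "C x \<in> C ` g" using fg Cxy by auto
      then show False using L1[OF fg(1,3) False] fg(5) by blast
    qed
  qed
  then have "A = {}" using AB by simp
  then have ex: "{f\<in>E'. x \<in> f} = {}" unfolding A_def by simp
  have "{e\<in>E. x \<in> e} = {{x,y}}" by (simp only: Ex_pair[OF assms] ex)
  then have dx: "deg x = 1" unfolding deg_def by simp
  have "B = {}" using AB \<open>A = {}\<close> by simp
  then have ey: "{f\<in>E'. y \<in> f} = {}" unfolding B_def by simp
  have "{e\<in>E. y \<in> e} = {{y,x}}" by (simp only: Ex_pair[OF yx] ey)
  then have dy: "deg y = 1" unfolding deg_def by simp
  have "{x,y} \<in> E" using key[OF assms] by simp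
  then show False using nie xy dx dy mdeg_E unfolding no_isolated_edges_def by fastforce
qed

lemma avd_merged: assumes "{x,y} \<in> E" "{x,y} \<notin> CE" "\<not> single x"
  shows "Sc E id c2 x \<noteq> Sc E id c2 y"
proof
  assume eq: "Sc E id c2 x = Sc E id c2 y"
  have "card (Sc E id c2 x) = deg x" "card (Sc E id c2 y) = deg y" using c2_card unfolding Sc_def by simp_all
  then have "deg x = deg y" using eq by simp
  moreover have "low V E x" using merged_low assms(3) by blast
  moreover have "\<not> low V E y" using merged_nb assms by blast
  ultimately show False using low_iff by simp
qed

lemma Sc_single: assumes "single x" shows "Sc E id c2 x = Sc E' ends' c (C x)"
proof -
  have "Sc E id c2 x = c2 ` {e\<in>E'. C x \<in> C ` e}" unfolding Sc_def using single_edges[OF assms] by simp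
  also have "\<dots> = c ` {e\<in>E'. C x \<in> C ` e}" using c2_on_E' by (intro image_cong) auto
  finally show ?thesis unfolding Sc_def ends'_eq by simp
qed

lemma c2_avd: "avd_coloring E id c2"
  unfolding avd_coloring_def
proof (intro conjI allI impI ballI)
  fix e f assume "e \<in> E" "f \<in> E" "e \<noteq> f \<and> id e \<inter> id f \<noteq> {}"
  then show "c2 e \<noteq> c2 f" using c2_proper by auto
next
  fix x y assume "madj E id x y"
  then have xy: "x \<noteq> y" "{x,y} \<in> E" unfolding madj_def by auto
  show "Sc E id c2 x \<noteq> Sc E id c2 y"
  proof (cases "{x,y} \<in> CE")
    case True then show ?thesis by (rule avd_pair)
  next
    case False
    show ?thesis
    proof (cases "single x")
      case sx: True
      show ?thesis
      proof (cases "single y")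
        case sy: True
        have "{x,y} \<in> E'" using xy False E'_def2 by simp
        moreover have "C x \<noteq> C y" using cls_single sx sy xy by simp
        ultimately have "madj E' ends' (C x) (C y)" unfolding madj_def ends'_eq
          by (intro conjI bexI[of _ "{x,y}"]) simp_all
        then have "Sc E' ends' c (C x) \<noteq> Sc E' ends' c (C y)" using avd unfolding avd_coloring_def by simp
        then show ?thesis using Sc_single sx sy by simp
      next
        case False
        have "{y,x} \<in> E" "{y,x} \<notin> CE" using xy \<open>{x,y} \<notin> CE\<close> by (simp_all add: insert_commute)
        then have "Sc E id c2 y \<noteq> Sc E id c2 x" by (rule avd_merged[OF _ _ False])
        then show ?thesis by (rule not_sym)
      qed
    next
      case nx: False
      show ?thesis by (rule avd_merged[OF xy(2) \<open>{x,y} \<notin> CE\<close> nx])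
    qed
  qed
qed

lemma c2_cardP: "card (c2 ` E) \<le> card (c ` E')"
  using card_mono[OF finP c2_range] unfolding P_def .

end

theorem mainTheorem2:
  fixes V :: "'a set" and E :: "'a set set"
  assumes "simple_graph V E"
    and "no_isolated_edges E id"
  defines "\<Delta> \<equiv> maxdeg V E id"
    and "V' \<equiv> contr_V V E" and "E' \<equiv> contr_E V E" and "ends' \<equiv> contr_ends V E"
  shows "loopless E' ends'
    \<and> (\<forall>x y. x \<noteq> y \<longrightarrow> multiplicity E' ends' x y \<le> 2)
    \<and> maxdeg V' E' ends' = \<Delta>
    \<and> no_isolated_edges {e\<in>E'. \<forall>x\<in>ends' e. real (mdeg E' ends' x) < real \<Delta> / 3} ends'
    \<and> (\<forall>p::nat. p > 0 \<longrightarrow>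
         (\<exists>c :: 'a set \<Rightarrow> nat. avd_coloring E' ends' c \<and> card (c ` E') \<le> p) \<longrightarrow>
         (\<exists>c :: 'a set \<Rightarrow> nat. avd_coloring E id c \<and> card (c ` E) \<le> p))"
proof -
  interpret GG V E using assms(1,2) by unfold_locales
  have col: "\<exists>c2 :: 'a set \<Rightarrow> nat. avd_coloring E id c2 \<and> card (c2 ` E) \<le> p"
    if "avd_coloring E' ends' c" "card (c ` E') \<le> p" for p and c :: "'a set \<Rightarrow> nat"
  proof -
    interpret GC V E c using that(1) assms(1,2) unfolding E'_def ends'_def by unfold_locales
    show ?thesis using c2_avd c2_cardP that(2) unfolding E'_def by (intro exI[of _ c2]) auto
  qed
  show ?thesis unfolding \<Delta>_def V'_def E'_def ends'_def
    using loopless' mult' maxdeg' H_nie col[unfolded E'_def ends'_def] by blast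
qed

end
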